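(* Let $\mathcal{S}_{\textsf{EVSP}}$ denote an optimal solution for $\mathcal{I}_{\textsf{EVSP}} = f(\mathcal{I}_{\textsf{BPP}})$. If a solution $\mathcal{S}_{\textsf{BPP}}$ for $\mathcal{I}_{\textsf{BPP}}$ is constructed from $\mathcal{S}_{\textsf{EVSP}}$ by packing, for each vehicle used to serve item customers, all items associated with the item customers served by that vehicle into a single bin, and packing each item associated with an unserved item customer (if any) into its own bin, then $\mathcal{S}_{\textsf{BPP}}$ is an optimal solution for $\mathcal{I}_{\textsf{BPP}}$.
   Context: The electric vehicle sharing problem (EVSP): there is a set of stations, each with a capacity (number of parking spaces) and a number of charging facilities; a fleet of identical electric vehicles with battery capacity $\textsf{L}$ initially located at stations; and a set of customers, each with a set of driving demands $(s^{\text{out}}, t_i, s^{\text{in}}, t_j, \varepsilon)$ (pick-up station, departure time, drop-off station, arrival time, required energy). A demand is fulfilled by a vehicle if the vehicle is at the pick-up station at time $t_i$, its battery energy is at least $\varepsilon$, and there is a free parking space at the drop-off station; the vehicle's energy decreases by $\varepsilon$ and increases only by charging at a charging facility. A customer is served iff all its demands are fulfilled; the objective is to maximize the total rental time $\sum (t_j - t_i)$ over demands of served customers. The one-dimensional bin packing problem (BPP): given items $\mathcal{N} = \{1,\dots,n\}$ with sizes $\ell_i \in (0,1]$, find a partition $\{\mathcal{N}_1,\dots,\mathcal{N}_k\}$ of $\mathcal{N}$ such that the sizes in each part sum to at most $1$ and $k$ (the number of bins) is minimized. The reduction $f$ maps a BPP instance $\mathcal{I}_{\textsf{BPP}}$ to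 the EVSP instance $\mathcal{I}_{\textsf{EVSP}}$ with $2n$ customers, each having a single demand: there is a single station $s$ with capacity $n$ and no charging facilities; there are $n$ fully charged vehicles initially at $s$, each with battery capacity $\textsf{L} = 1$; for each item $i \in \mathcal{N}$ there is an item customer with the single demand $(s, 2i, s, 2i+1, \ell_i)$; and there are $n$ dummy customers, each with the single demand $(s, 1, s, 2, \textsf{L})$. Each customer contributes rental time $1$ to the objective, so maximizing total rental time is equivalent to maximizing the number of served customers. *)

theory Defs
  imports Complex_Main "HOL-Library.Disjoint_Sets"
begin

definition bpp_feasible :: "nat \<Rightarrow> (nat \<Rightarrow> real) \<Rightarrow> nat set set \<Rightarrow> bool" where
  "bpp_feasible n l P \<longleftrightarrow> partition_on {1..n} P \<and> (\<forall>B\<in>P. (\<Sum>i\<in>B. l i) \<le> 1)"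

definition bpp_optimal :: "nat \<Rightarrow> (nat \<Rightarrow> real) \<Rightarrow> nat set set \<Rightarrow> bool" where
  "bpp_optimal n l P \<longleftrightarrow> bpp_feasible n l P \<and>
     (\<forall>Q. bpp_feasible n l Q \<longrightarrow> card P \<le> card Q)"

text \<open>A driving demand: pick-up station, departure time, drop-off station, arrival time,
  required energy.\<close>
record demand =
  pu :: nat
  td :: nat
  dof :: nat
  ta :: nat
  en :: real

text \<open>An EVSP instance without charging facilities; customers of type 'c, vehicles and
  stations are natural numbers. Vehicles start fully charged (energy = batt).\<close>
record 'c evsp =
  stns :: "nat set"
  cap :: "nat \<Rightarrow> nat"
  vehs :: "nat set"
  loc0 :: "nat \<Rightarrow> nat"
  batt :: real
  custs :: "'c set"
  dems :: "'c \<Rightarrow> demand list"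

text \<open>A solution: a set of served customers and an assignment of each demand (c, k)
  (the k-th demand of customer c) to a vehicle.\<close>

definition dem_of :: "'c evsp \<Rightarrow> 'c \<times> nat \<Rightarrow> demand" where
  "dem_of I x = dems I (fst x) ! snd x"

definition trips :: "'c evsp \<Rightarrow> 'c set \<Rightarrow> ('c \<Rightarrow> nat \<Rightarrow> nat) \<Rightarrow> nat \<Rightarrow> ('c \<times> nat) set" where
  "trips I S a v = {(c, k). c \<in> S \<and> k < length (dems I c) \<and> a c k = v}"

definition loc_at :: "'c evsp \<Rightarrow> ('c \<times> nat) set \<Rightarrow> nat \<Rightarrow> nat \<Rightarrow> nat" where
  "loc_at I T v t =
     (if \<exists>y\<in>T. ta (dem_of I y) \<le> t
      then dof (dem_of I (ARG_MAX (\<lambda>y. ta (dem_of I y)) y. y \<in> T \<and> ta (dem_of I y) \<le> t))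
      else loc0 I v)"

text \<open>Vehicle v with trip set T is parked at station s at time t: it is not driving
  (a vehicle departing at t has left, a vehicle arriving at t is parked) and its location is s.\<close>
definition parked :: "'c evsp \<Rightarrow> ('c \<times> nat) set \<Rightarrow> nat \<Rightarrow> nat \<Rightarrow> nat \<Rightarrow> bool" where
  "parked I T v s t \<longleftrightarrow>
     (\<not> (\<exists>y\<in>T. td (dem_of I y) \<le> t \<and> t < ta (dem_of I y))) \<and> loc_at I T v t = s"

definition evsp_feasible :: "'c evsp \<Rightarrow> 'c set \<Rightarrow> ('c \<Rightarrow> nat \<Rightarrow> nat) \<Rightarrow> bool" where
  "evsp_feasible I S a \<longleftrightarrow>
     S \<subseteq> custs I \<and>
     (\<forall>c\<in>S. \<forall>k < length (dems I c). a c k \<in> vehs I) \<and>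
     (\<forall>v\<in>vehs I. let T = trips I S a v in
        \<comment> \<open>the vehicle performs at most one trip at a time\<close>
        (\<forall>x\<in>T. \<forall>y\<in>T. x \<noteq> y \<longrightarrow>
            ta (dem_of I x) \<le> td (dem_of I y) \<or> ta (dem_of I y) \<le> td (dem_of I x)) \<and>
        \<comment> \<open>it is at the pick-up station at departure time\<close>
        (\<forall>x\<in>T. loc_at I T v (td (dem_of I x)) = pu (dem_of I x)) \<and>
        \<comment> \<open>its energy (no charging) suffices: initial energy minus energy of earlier trips\<close>
        (\<forall>x\<in>T. en (dem_of I x) \<le>
            batt I - (\<Sum>y\<in>{y\<in>T. ta (dem_of I y) \<le> td (dem_of I x)}. en (dem_of I y))) \<and>
        \<comment> \<open>a free parking space at the drop-off station at arrival time\<close>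
        (\<forall>x\<in>T. card {w\<in>vehs I. w \<noteq> v \<and>
              parked I (trips I S a w) w (dof (dem_of I x)) (ta (dem_of I x))}
            < cap I (dof (dem_of I x))))"

definition evsp_value :: "'c evsp \<Rightarrow> 'c set \<Rightarrow> nat" where
  "evsp_value I S = (\<Sum>c\<in>S. \<Sum>d\<leftarrow>dems I c. ta d - td d)"

definition evsp_optimal :: "'c evsp \<Rightarrow> 'c set \<Rightarrow> ('c \<Rightarrow> nat \<Rightarrow> nat) \<Rightarrow> bool" where
  "evsp_optimal I S a \<longleftrightarrow> evsp_feasible I S a \<and>
     (\<forall>S' a'. evsp_feasible I S' a' \<longrightarrow> evsp_value I S' \<le> evsp_value I S)"

datatype cust = Item nat | Dummy nat

definition reduction :: "nat \<Rightarrow> (nat \<Rightarrow> real) \<Rightarrow> cust evsp" where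
  "reduction n l =
     \<lparr> stns = {0}, cap = (\<lambda>_. n), vehs = {1..n}, loc0 = (\<lambda>_. 0), batt = 1,
       custs = Item ` {1..n} \<union> Dummy ` {1..n},
       dems = (\<lambda>c. case c of
                 Item i \<Rightarrow> [\<lparr>pu = 0, td = 2 * i, dof = 0, ta = 2 * i + 1, en = l i\<rparr>]
               | Dummy j \<Rightarrow> [\<lparr>pu = 0, td = 1, dof = 0, ta = 2, en = 1\<rparr>]) \<rparr>"

definition packing_from :: "nat \<Rightarrow> cust set \<Rightarrow> (cust \<Rightarrow> nat \<Rightarrow> nat) \<Rightarrow> nat set set" where
  "packing_from n S a =
     {{i \<in> {1..n}. Item i \<in> S \<and> a (Item i) 0 = v} | v.
         v \<in> {1..n} \<and> (\<exists>i\<in>{1..n}. Item i \<in> S \<and> a (Item i) 0 = v)}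
     \<union> {{i} | i. i \<in> {1..n} \<and> Item i \<notin> S}"

end

theory Submission
  imports Defs
begin

lemma red_simps[simp]:
  "stns (reduction n l) = {0}" "cap (reduction n l) s = n" "vehs (reduction n l) = {1..n}"
  "loc0 (reduction n l) v = 0" "batt (reduction n l) = 1"
  "custs (reduction n l) = Item ` {1..n} \<union> Dummy ` {1..n}"
  "dems (reduction n l) (Item i) = [\<lparr>pu = 0, td = 2 * i, dof = 0, ta = 2 * i + 1, en = l i\<rparr>]"
  "dems (reduction n l) (Dummy j) = [\<lparr>pu = 0, td = 1, dof = 0, ta = 2, en = 1\<rparr>]"
  by (simp_all add: reduction_def)

lemma len_dems[simp]: "length (dems (reduction n l) c) = 1"
  by (cases c) auto

lemma dem_of_simps[simp]:
  "dem_of (reduction n l) (Item i, 0) = \<lparr>pu = 0, td = 2 * i, dof = 0, ta = 2 * i + 1, en = l i\<rparr>"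
  "dem_of (reduction n l) (Dummy j, 0) = \<lparr>pu = 0, td = 1, dof = 0, ta = 2, en = 1\<rparr>"
  by (simp_all add: dem_of_def)

lemma trips_red: "trips (reduction n l) S a v = {(c, 0) | c. c \<in> S \<and> a c 0 = v}"
  by (auto simp: trips_def)

lemma loc_at_red:
  assumes "T \<subseteq> UNIV \<times> {0}"
  shows "loc_at (reduction n l) T v t = 0"
proof -
  let ?I = "reduction n l"
  let ?P = "\<lambda>y. y \<in> T \<and> ta (dem_of ?I y) \<le> t"
  show ?thesis
  proof (cases "\<exists>y\<in>T. ta (dem_of ?I y) \<le> t")
    case True
    then obtain k where "?P k" by blast
    then have "?P (arg_max (\<lambda>y. ta (dem_of ?I y)) ?P)"
      by (rule arg_max_natI[where b = "Suc t"]) auto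
    then obtain c where c: "arg_max (\<lambda>y. ta (dem_of ?I y)) ?P = (c, 0)" using assms by auto
    show ?thesis using True unfolding loc_at_def c by (cases c) auto
  qed (simp add: loc_at_def)
qed

lemma cap_red:
  assumes "v \<in> {1..n::nat}"
  shows "card {w\<in>{1..n}. w \<noteq> v \<and> P w} < n"
proof -
  have "card {w\<in>{1..n}. w \<noteq> v \<and> P w} \<le> card ({1..n} - {v})"
    by (rule card_mono) auto
  also have "\<dots> < n" using assms by simp
  finally show ?thesis .
qed

lemma value_red: "evsp_value (reduction n l) S = card S"
proof -
  have "\<And>c. (\<Sum>d\<leftarrow>dems (reduction n l) c. ta d - td d) = 1"
    subgoal for c by (cases c) simp_all
    done
  then show ?thesis by (simp add: evsp_value_def)
qed
lemma ta_ge2: "c \<in> custs (reduction n l) \<Longrightarrow> 2 \<le> ta (dem_of (reduction n l) (c, 0))"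
  by auto

definition blk :: "'a set set \<Rightarrow> 'a \<Rightarrow> 'a set" where
  "blk Q i = (THE B. B \<in> Q \<and> i \<in> B)"

lemma blk_eq:
  assumes part: "partition_on A Q" and B: "B \<in> Q" "i \<in> B"
  shows "blk Q i = B"
  unfolding blk_def
proof (rule the_equality)
  show "B \<in> Q \<and> i \<in> B" using B by simp
  fix B' assume h: "B' \<in> Q \<and> i \<in> B'"
  show "B' = B"
  proof (rule ccontr)
    assume "B' \<noteq> B"
    then have "disjnt B' B" using partition_onD2[OF part] h B(1) by (simp add: pairwise_def)
    then show False using h B(2) by (simp add: disjnt_iff)
  qed
qed

lemma blk_mem:
  assumes part: "partition_on A Q" and i: "i \<in> A"
  shows "blk Q i \<in> Q" "i \<in> blk Q i"
proof -
  obtain B where B: "B \<in> Q" "i \<in> B" using partition_onD1[OF part] i by blast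
  show "blk Q i \<in> Q" "i \<in> blk Q i" using blk_eq[OF part B] B by simp_all
qed

lemma card_part_le:
  assumes "bpp_feasible n l Q"
  shows "card Q \<le> n"
proof -
  have part: "partition_on {1..n} Q" using assms by (simp add: bpp_feasible_def)
  have "Q \<subseteq> blk Q ` {1..n}"
  proof
    fix B assume B: "B \<in> Q"
    then obtain i where i: "i \<in> B" using partition_onD3[OF part] by (metis all_not_in_conv)
    then have "i \<in> {1..n}" using partition_onD1[OF part] B by blast
    moreover have "blk Q i = B" using blk_eq[OF part B i] .
    ultimately show "B \<in> blk Q ` {1..n}" by (metis imageI)
  qed
  then have "card Q \<le> card (blk Q ` {1..n})" by (intro card_mono) simp_all
  also have "\<dots> \<le> n" using card_image_le[of "{1..n}" "blk Q"] by simp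
  finally show ?thesis .
qed

lemma construct:
  assumes sizes: "\<forall>i\<in>{1..n}. 0 < l i \<and> l i \<le> 1" and Q: "bpp_feasible n l Q"
  shows "\<exists>S' a'. evsp_feasible (reduction n l) S' a' \<and> card S' = 2 * n - card Q"
proof -
  let ?I = "reduction n l"
  have part: "partition_on {1..n} Q" using Q by (simp add: bpp_feasible_def)
  have bsum: "\<And>B. B \<in> Q \<Longrightarrow> (\<Sum>i\<in>B. l i) \<le> 1" using Q by (simp add: bpp_feasible_def)
  have finQ: "finite Q" using finite_elements[OF _ part] by simp
  have Bsub: "\<And>B. B \<in> Q \<Longrightarrow> B \<subseteq> {1..n}" using partition_onD1[OF part] by blast
  define m where "m = card Q"
  have mn: "m \<le> n" using card_part_le[OF Q] m_def by simp
  obtain h where h: "bij_betw h Q {0..<m}" using ex_bij_betw_finite_nat[OF finQ] m_def by blast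
  define S' where "S' = Item ` {1..n} \<union> Dummy ` {m+1..n}"
  define a' where "a' = (\<lambda>c (k::nat). case c of Item i \<Rightarrow> h (blk Q i) + 1 | Dummy j \<Rightarrow> j)"
  have hlt: "\<And>i. i \<in> {1..n} \<Longrightarrow> h (blk Q i) < m"
    using h blk_mem[OF part] by (auto simp: bij_betw_def)
  have hinj: "\<And>i i'. i \<in> {1..n} \<Longrightarrow> i' \<in> {1..n} \<Longrightarrow> h (blk Q i) = h (blk Q i') \<Longrightarrow> blk Q i = blk Q i'"
    using h blk_mem[OF part] by (auto simp: bij_betw_def inj_on_def)
  have Tsub: "\<And>v. trips ?I S' a' v \<subseteq> UNIV \<times> {0}" by (auto simp: trips_red)
  have feas: "evsp_feasible ?I S' a'"
    unfolding evsp_feasible_def Let_def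
  proof (intro conjI ballI allI impI)
    show "S' \<subseteq> custs ?I" using mn by (auto simp: S'_def)
  next
    fix c k assume "c \<in> S'" "k < length (dems ?I c)"
    then show "a' c k \<in> vehs ?I" using hlt mn by (fastforce simp: S'_def a'_def)
  next
    fix v x y assume "v \<in> vehs ?I" and x: "x \<in> trips ?I S' a' v" and y: "y \<in> trips ?I S' a' v"
      and xy: "x \<noteq> y"
    from x obtain c where c: "x = (c, 0)" "c \<in> S'" "a' c 0 = v" by (auto simp: trips_red)
    from y obtain c' where c': "y = (c', 0)" "c' \<in> S'" "a' c' 0 = v" by (auto simp: trips_red)
    show "ta (dem_of ?I x) \<le> td (dem_of ?I y) \<or> ta (dem_of ?I y) \<le> td (dem_of ?I x)"
      using c c' xy by (cases c; cases c') (auto simp: S'_def a'_def)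
  next
    fix v x assume "v \<in> vehs ?I" and x: "x \<in> trips ?I S' a' v"
    from x obtain c where c: "x = (c, 0)" "c \<in> S'" "a' c 0 = v" by (auto simp: trips_red)
    show "loc_at ?I (trips ?I S' a' v) v (td (dem_of ?I x)) = pu (dem_of ?I x)"
      using loc_at_red[OF Tsub] c by (cases c) auto
  next
    fix v x assume "v \<in> vehs ?I"
    then show "card {w \<in> vehs ?I. w \<noteq> v \<and> parked ?I (trips ?I S' a' w) w (dof (dem_of ?I x)) (ta (dem_of ?I x))}
            < cap ?I (dof (dem_of ?I x))"
      using cap_red by simp
  next
    fix v x assume "v \<in> vehs ?I" and x: "x \<in> trips ?I S' a' v"
    let ?T = "trips ?I S' a' v"
    let ?E = "{y \<in> ?T. ta (dem_of ?I y) \<le> td (dem_of ?I x)}"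
    from x obtain c where c: "x = (c, 0)" "c \<in> S'" "a' c 0 = v" by (auto simp: trips_red)
    show "en (dem_of ?I x) \<le> batt ?I - (\<Sum>y\<in>?E. en (dem_of ?I y))"
    proof (cases c)
      case (Dummy j)
      have "?E = {}"
      proof -
        have "\<And>y. y \<in> ?T \<Longrightarrow> 2 \<le> ta (dem_of ?I y)"
        proof -
          fix y assume "y \<in> ?T"
          then obtain c' where "y = (c', 0)" "c' \<in> S'" by (auto simp: trips_red)
          moreover have "c' \<in> custs ?I" using \<open>c' \<in> S'\<close> mn by (auto simp: S'_def)
          ultimately show "2 \<le> ta (dem_of ?I y)" using ta_ge2 by simp
        qed
        note ge = this
        have tdx: "td (dem_of ?I x) = 1" using c Dummy by simp
        show ?thesis
        proof (rule equals0I)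
          fix y assume y: "y \<in> ?E"
          then have "2 \<le> ta (dem_of ?I y)" using ge by blast
          moreover have "ta (dem_of ?I y) \<le> 1" using y tdx by simp
          ultimately show False by simp
        qed
      qed
      then show ?thesis by (subst \<open>?E = {}\<close>) (simp add: c Dummy)
    next
      case (Item i)
      have i: "i \<in> {1..n}" using c Item by (auto simp: S'_def)
      have v: "v = h (blk Q i) + 1" using c Item by (simp add: a'_def)
      let ?B = "blk Q i"
      have BQ: "?B \<in> Q" and iB: "i \<in> ?B" using blk_mem[OF part i] by auto
      have Bs: "?B \<subseteq> {1..n}" using Bsub[OF BQ] .
      have finB: "finite ?B" using Bs finite_subset by blast
      have Esub: "?E \<subseteq> (\<lambda>i'. (Item i', 0)) ` (?B - {i})"
      proof
        fix y assume y: "y \<in> ?E"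
        then obtain c' where c': "y = (c', 0)" "c' \<in> S'" "a' c' 0 = v" by (auto simp: trips_red)
        show "y \<in> (\<lambda>i'. (Item i', 0)) ` (?B - {i})"
        proof (cases c')
          case (Dummy j)
          then have "j = v" "j \<ge> m + 1" using c' by (auto simp: S'_def a'_def)
          then show ?thesis using v hlt[OF i] by simp
        next
          case (Item i')
          have i': "i' \<in> {1..n}" using c' Item by (auto simp: S'_def)
          have "h (blk Q i') = h ?B" using c' Item v by (simp add: a'_def)
          then have "blk Q i' = ?B" using hinj[OF i' i] by simp
          then have "i' \<in> ?B" using blk_mem(2)[OF part i'] by simp
          moreover have "i' \<noteq> i" using y c' Item c \<open>c = Item i\<close> by auto
          ultimately show ?thesis using c' Item by auto
        qed
      qed
      have "(\<Sum>y\<in>?E. en (dem_of ?I y)) \<le> (\<Sum>y\<in>(\<lambda>i'. (Item i', 0)) ` (?B - {i}). en (dem_of ?I y))"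
      proof (rule sum_mono2)
        show "finite ((\<lambda>i'. (Item i', 0)) ` (?B - {i}))" using finB by simp
        show "?E \<subseteq> (\<lambda>i'. (Item i', 0)) ` (?B - {i})" by (rule Esub)
        have lnn: "\<forall>i'\<in>?B. 0 \<le> l i'" using Bs sizes by (fastforce intro: less_imp_le)
        then show "\<And>b. b \<in> (\<lambda>i'. (Item i', 0)) ` (?B - {i}) - ?E \<Longrightarrow> 0 \<le> en (dem_of ?I b)" by auto
      qed
      also have "\<dots> = (\<Sum>i'\<in>?B - {i}. l i')"
        by (subst sum.reindex) (auto simp: inj_on_def)
      finally have "l i + (\<Sum>y\<in>?E. en (dem_of ?I y)) \<le> (\<Sum>i'\<in>?B. l i')"
        using sum.remove[OF finB iB, of l] by simp
      then show ?thesis using bsum[OF BQ] c Item by simp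
    qed
  qed
  have "card S' = card (Item ` {1..n}) + card (Dummy ` {m+1..n})"
    unfolding S'_def by (rule card_Un_disjoint) auto
  also have "\<dots> = n + (n - m)"
    by (simp add: card_image inj_on_def)
  finally have "card S' = 2 * n - card Q" using mn m_def by simp
  with feas show ?thesis by blast
qed

lemma en_nonneg:
  assumes "\<forall>i\<in>{1..n}. 0 < l i \<and> l i \<le> 1" "c \<in> custs (reduction n l)"
  shows "0 \<le> en (dem_of (reduction n l) (c, 0))"
  using assms by (auto intro: less_imp_le)

theorem proposition7:
  fixes n :: nat and l :: "nat \<Rightarrow> real"
    and S :: "cust set" and a :: "cust \<Rightarrow> nat \<Rightarrow> nat"
  assumes sizes: "\<forall>i\<in>{1..n}. 0 < l i \<and> l i \<le> 1"
    and opt: "evsp_optimal (reduction n l) S a"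
  shows "bpp_optimal n l (packing_from n S a)"
proof -
  let ?I = "reduction n l"
  have feas: "evsp_feasible ?I S a" and best: "\<And>S' a'. evsp_feasible ?I S' a' \<Longrightarrow> card S' \<le> card S"
    using opt by (auto simp: evsp_optimal_def value_red)
  have Scust: "S \<subseteq> custs ?I" using feas by (simp add: evsp_feasible_def)
  have finS: "finite S" using Scust finite_subset by fastforce
  have aveh: "\<And>c. c \<in> S \<Longrightarrow> a c 0 \<in> {1..n}" using feas by (simp add: evsp_feasible_def)
  define T where "T = (\<lambda>v. trips ?I S a v)"
  have memT: "\<And>c k v. (c, k) \<in> T v \<longleftrightarrow> c \<in> S \<and> k = 0 \<and> a c 0 = v"
    by (auto simp: T_def trips_red)
  have finT: "\<And>v. finite (T v)"
  proof -
    fix v have "T v \<subseteq> S \<times> {0}" using memT by auto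
    then show "finite (T v)" using finS finite_subset by blast
  qed
  have nnT: "\<And>v y. y \<in> T v \<Longrightarrow> 0 \<le> en (dem_of ?I y)"
  proof -
    fix v y assume y: "y \<in> T v"
    obtain c k where ck: "y = (c, k)" by (cases y)
    then have "c \<in> S" "k = 0" using memT y by auto
    then show "0 \<le> en (dem_of ?I y)" using ck Scust en_nonneg[OF sizes, of c] by auto
  qed
  have pw: "\<And>v x y. v \<in> {1..n} \<Longrightarrow> x \<in> T v \<Longrightarrow> y \<in> T v \<Longrightarrow> x \<noteq> y \<Longrightarrow>
      ta (dem_of ?I x) \<le> td (dem_of ?I y) \<or> ta (dem_of ?I y) \<le> td (dem_of ?I x)"
    using feas unfolding evsp_feasible_def Let_def T_def by simp
  have energy: "\<And>v x. v \<in> {1..n} \<Longrightarrow> x \<in> T v \<Longrightarrow> en (dem_of ?I x) \<le>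
      1 - (\<Sum>y\<in>{y\<in>T v. ta (dem_of ?I y) \<le> td (dem_of ?I x)}. en (dem_of ?I y))"
    using feas unfolding evsp_feasible_def Let_def T_def by simp

  define IS where "IS = {i\<in>{1..n}. Item i \<in> S}"
  define U where "U = {i\<in>{1..n}. Item i \<notin> S}"
  define D where "D = {j. Dummy j \<in> S}"
  define VI where "VI = (\<lambda>i. a (Item i) 0) ` IS"
  define VD where "VD = (\<lambda>j. a (Dummy j) 0) ` D"
  define blockof where "blockof = (\<lambda>v. {i\<in>{1..n}. Item i \<in> S \<and> a (Item i) 0 = v})"
  have P_eq: "packing_from n S a = blockof ` VI \<union> (\<lambda>i. {i}) ` U"
  proof -
    have A: "{{i \<in> {1..n}. Item i \<in> S \<and> a (Item i) 0 = v} | v. v \<in> {1..n} \<and> (\<exists>i\<in>{1..n}. Item i \<in> S \<and> a (Item i) 0 = v)} = blockof ` VI"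
      unfolding blockof_def VI_def IS_def using aveh by blast
    have B: "{{i} | i. i \<in> {1..n} \<and> Item i \<notin> S} = (\<lambda>i. {i}) ` U"
      unfolding U_def by blast
    show ?thesis unfolding packing_from_def A B ..
  qed

  have Dsub: "D \<subseteq> {1..n}" using Scust by (auto simp: D_def)
  have injD: "inj_on (\<lambda>j. a (Dummy j) 0) D"
  proof (rule inj_onI)
    fix j j' assume j: "j \<in> D" and j': "j' \<in> D" and eq: "a (Dummy j) 0 = a (Dummy j') 0"
    show "j = j'"
    proof (rule ccontr)
      assume ne: "j \<noteq> j'"
      let ?v = "a (Dummy j) 0"
      have "?v \<in> {1..n}" using aveh j by (simp add: D_def)
      moreover have "(Dummy j, 0) \<in> T ?v" "(Dummy j', 0) \<in> T ?v" using memT j j' eq by (auto simp: D_def)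
      ultimately show False using pw[of ?v "(Dummy j, 0)" "(Dummy j', 0)"] ne by simp
    qed
  qed
  have disj: "VI \<inter> VD = {}"
  proof (rule ccontr)
    assume "VI \<inter> VD \<noteq> {}"
    then obtain i j where i: "i \<in> IS" and j: "j \<in> D" and eq: "a (Item i) 0 = a (Dummy j) 0"
      unfolding VI_def VD_def by blast
    let ?v = "a (Item i) 0"
    have v: "?v \<in> {1..n}" using aveh i by (simp add: IS_def)
    have i1: "1 \<le> i" using i by (simp add: IS_def)
    have xT: "(Item i, 0) \<in> T ?v" using memT i by (simp add: IS_def)
    have yT: "(Dummy j, 0) \<in> T ?v" using memT j eq by (simp add: D_def)
    let ?E = "{y\<in>T ?v. ta (dem_of ?I y) \<le> td (dem_of ?I (Item i, 0))}"
    have yE: "(Dummy j, 0) \<in> ?E" using yT i1 by simp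
    have "en (dem_of ?I (Dummy j, 0)) \<le> (\<Sum>y\<in>?E. en (dem_of ?I y))"
      by (rule member_le_sum[OF yE]) (use nnT finT in auto)
    then have "1 \<le> (\<Sum>y\<in>?E. en (dem_of ?I y))" by simp
    moreover have "l i \<le> 1 - (\<Sum>y\<in>?E. en (dem_of ?I y))" using energy[OF v xT] by simp
    moreover have "0 < l i" using sizes i by (simp add: IS_def)
    ultimately show False by linarith
  qed
  have VIsub: "VI \<subseteq> {1..n}" using aveh by (auto simp: VI_def IS_def)
  have VDsub: "VD \<subseteq> {1..n}" using aveh by (auto simp: VD_def D_def)
  have cardV: "card VI + card D \<le> n"
  proof -
    have "card VI + card D = card VI + card VD" using injD by (simp add: VD_def card_image)
    also have "\<dots> = card (VI \<union> VD)" using disj VIsub VDsub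
      by (intro card_Un_disjoint[symmetric]) (auto intro: finite_subset)
    also have "\<dots> \<le> card {1..n}" using VIsub VDsub by (intro card_mono) auto
    finally show ?thesis by simp
  qed
  have cardS: "card S = card IS + card D"
  proof -
    have "S = Item ` IS \<union> Dummy ` D" using Scust by (auto simp: IS_def D_def)
    moreover have "finite (Item ` IS)" by (simp add: IS_def)
    moreover have "finite (Dummy ` D)" using Dsub finite_subset by (metis finite_atLeastAtMost finite_imageI)
    moreover have "Item ` IS \<inter> Dummy ` D = {}" by auto
    ultimately have "card S = card (Item ` IS) + card (Dummy ` D)"
      by (simp add: card_Un_disjoint)
    then show ?thesis by (simp add: card_image inj_on_def)
  qed
  have cardIU: "card IS + card U = n"
  proof -
    have "card IS + card U = card (IS \<union> U)"
      by (intro card_Un_disjoint[symmetric]) (auto simp: IS_def U_def)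
    also have "IS \<union> U = {1..n}" by (auto simp: IS_def U_def)
    finally show ?thesis by simp
  qed
  have cardP: "card (packing_from n S a) \<le> card VI + card U"
  proof -
    have "card (packing_from n S a) \<le> card (blockof ` VI) + card ((\<lambda>i. {i}) ` U)"
      unfolding P_eq by (rule card_Un_le)
    also have "\<dots> \<le> card VI + card U"
    proof (rule add_mono)
      show "card (blockof ` VI) \<le> card VI" by (rule card_image_le) (use VIsub finite_subset in blast)
      show "card ((\<lambda>i. {i}) ` U) \<le> card U" by (rule card_image_le) (simp add: U_def)
    qed
    finally show ?thesis .
  qed

  have blk_sub: "\<And>v. blockof v \<subseteq> {1..n}" by (auto simp: blockof_def)
  have key: "\<And>X i. X \<in> packing_from n S a \<Longrightarrow> i \<in> X \<Longrightarrow>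
      X = (if Item i \<in> S then blockof (a (Item i) 0) else {i})"
  proof -
    fix X i assume X: "X \<in> packing_from n S a" and i: "i \<in> X"
    show "X = (if Item i \<in> S then blockof (a (Item i) 0) else {i})"
    proof (cases "X \<in> blockof ` VI")
      case True
      then obtain v where v: "X = blockof v" by blast
      then have "Item i \<in> S" "a (Item i) 0 = v" using i by (auto simp: blockof_def)
      then show ?thesis using v by simp
    next
      case False
      then have "X \<in> (\<lambda>i. {i}) ` U" using X P_eq by blast
      then obtain j where j: "X = {j}" "j \<in> U" by blast
      then show ?thesis using i by (auto simp: U_def)
    qed
  qed
  have Pfeas: "bpp_feasible n l (packing_from n S a)"
    unfolding bpp_feasible_def partition_on_def
  proof (intro conjI ballI)
    show "\<Union>(packing_from n S a) = {1..n}"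
    proof (rule set_eqI iffI)+
      fix i assume "i \<in> \<Union>(packing_from n S a)"
      then show "i \<in> {1..n}" unfolding P_eq by (auto simp: U_def blockof_def)
    next
      fix i :: nat assume i: "i \<in> {1..n}"
      show "i \<in> \<Union>(packing_from n S a)"
      proof (cases "Item i \<in> S")
        case True
        then have "a (Item i) 0 \<in> VI" "i \<in> blockof (a (Item i) 0)" using i
          by (auto simp: VI_def IS_def blockof_def)
        then show ?thesis unfolding P_eq by blast
      next
        case False
        then have "i \<in> U" using i by (simp add: U_def)
        then show ?thesis unfolding P_eq by blast
      qed
    qed
  next
    show "disjoint (packing_from n S a)"
    proof (rule pairwiseI)
      fix X Y assume X: "X \<in> packing_from n S a" and Y: "Y \<in> packing_from n S a" and ne: "X \<noteq> Y"
      show "disjnt X Y"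
      proof (rule ccontr)
        assume "\<not> disjnt X Y"
        then obtain i where "i \<in> X" "i \<in> Y" by (auto simp: disjnt_def)
        then show False using key[OF X] key[OF Y] ne by metis
      qed
    qed
  next
    show "{} \<notin> packing_from n S a"
    proof
      assume "{} \<in> packing_from n S a"
      then have "{} \<in> blockof ` VI" unfolding P_eq by blast
      then obtain i where i: "i \<in> IS" "blockof (a (Item i) 0) = {}" by (auto simp: VI_def)
      then have "i \<in> blockof (a (Item i) 0)" by (simp add: IS_def blockof_def)
      then show False using i by simp
    qed
  next
    fix X assume X: "X \<in> packing_from n S a"
    show "(\<Sum>i\<in>X. l i) \<le> 1"
    proof (cases "X \<in> blockof ` VI")
      case False
      then have "X \<in> (\<lambda>i. {i}) ` U" using X P_eq by blast
      then obtain j where j: "X = {j}" "j \<in> U" by blast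
      then show ?thesis using sizes by (simp add: U_def)
    next
      case True
      then obtain i0 where i0: "i0 \<in> IS" and Xv: "X = blockof (a (Item i0) 0)" by (auto simp: VI_def)
      define v where "v = a (Item i0) 0"
      have v: "v \<in> {1..n}" using aveh i0 by (simp add: v_def IS_def)
      have XM: "X = blockof v" using Xv v_def by simp
      have finX: "finite X" using blk_sub XM finite_subset by (metis finite_atLeastAtMost)
      have i0X: "i0 \<in> X" using i0 XM by (simp add: blockof_def v_def IS_def)
      then have neX: "X \<noteq> {}" by blast
      define im where "im = Max X"
      have imX: "im \<in> X" using Max_in[OF finX neX] im_def by simp
      have imS: "Item im \<in> S" "a (Item im) 0 = v" "im \<in> {1..n}" using imX XM by (auto simp: blockof_def)
      have xT: "(Item im, 0) \<in> T v" using memT imS by simp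
      let ?E = "{y\<in>T v. ta (dem_of ?I y) \<le> td (dem_of ?I (Item im, 0))}"
      let ?G = "(\<lambda>i'. (Item i', 0::nat)) ` (X - {im})"
      have GE: "?G \<subseteq> ?E"
      proof
        fix y assume "y \<in> ?G"
        then obtain i' where i': "y = (Item i', 0)" "i' \<in> X" "i' \<noteq> im" by blast
        have "i' \<le> im" using Max_ge[OF finX i'(2)] im_def by simp
        then have "i' < im" using i'(3) by simp
        moreover have "Item i' \<in> S" "a (Item i') 0 = v" using i' XM by (auto simp: blockof_def)
        ultimately show "y \<in> ?E" using memT i' by simp
      qed
      have "(\<Sum>y\<in>?G. en (dem_of ?I y)) \<le> (\<Sum>y\<in>?E. en (dem_of ?I y))"
      proof (rule sum_mono2)
        show "finite ?E" using finT by simp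
        show "?G \<subseteq> ?E" by (rule GE)
        show "\<And>b. b \<in> ?E - ?G \<Longrightarrow> 0 \<le> en (dem_of ?I b)" using nnT by blast
      qed
      moreover have "(\<Sum>y\<in>?G. en (dem_of ?I y)) = (\<Sum>i'\<in>X - {im}. l i')"
        by (subst sum.reindex) (auto simp: inj_on_def)
      moreover have "l im \<le> 1 - (\<Sum>y\<in>?E. en (dem_of ?I y))" using energy[OF v xT] by simp
      ultimately have "l im + (\<Sum>i'\<in>X - {im}. l i') \<le> 1" by linarith
      then show ?thesis using sum.remove[OF finX imX, of l] by simp
    qed
  qed

  show ?thesis unfolding bpp_optimal_def
  proof (intro conjI allI impI)
    show "bpp_feasible n l (packing_from n S a)" by (rule Pfeas)
    fix Q assume Q: "bpp_feasible n l Q"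
    obtain S' a' where "evsp_feasible ?I S' a'" "card S' = 2 * n - card Q"
      using construct[OF sizes Q] by blast
    then have "2 * n - card Q \<le> card S" using best by metis
    moreover have "card Q \<le> n" using card_part_le[OF Q] .
    ultimately show "card (packing_from n S a) \<le> card Q" using cardP cardV cardS cardIU by linarith
  qed
qed

end
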